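(* Let $Q\ge0$, $R>0$, $M\ge0$ be symmetric matrices, $f:\mathbb{R}^n\times\mathbb{R}^m\to\mathbb{R}^n$ smooth, and consider an $s$-stage Runge–Kutta method with coefficients $a_{ij}$, $b_i>0$, step $h>0$ small enough that the constraints $x_{k+1}=x_k+h\sum_{i=1}^s b_if(x_{ki},u_{ki})$, $x_0=a$, $x_{ki}=x_k+h\sum_{j=1}^s a_{ij}f(x_{kj},u_{kj})$ ($0\le k\le N-1$, $1\le i\le s$) determine the vector of internal-stage states $X=(x_{01},\dots,x_{0s},\dots,x_{N-1,1},\dots,x_{N-1,s})$ and the node states $x_k$ as smooth functions $X=F(U)$, $x_k=F_d^k(U)$ of the vector of internal-stage controls $U=(u_{01},\dots,u_{0s},\dots,u_{N-1,s})$. Let $$J_d(U)=\tfrac12 F(U)^T\mathcal{Q}F(U)+\tfrac12U^T\mathcal{R}U+\tfrac12F_d^N(U)^TMF_d^N(U),$$ where $\mathcal{Q}$ (resp. $\mathcal{R}$) is the block-diagonal matrix whose diagonal blocks are, for each $k=0,\dots,N-1$ and $i=1,\dots,s$ in order, $hb_iQ$ (resp. $hb_iR$). Fix $U^0$, set $X^0=F(U^0)$, $x_N^0=F_d^N(U^0)$, and let $\tilde U$ be a minimizer of $\tfrac12X^T\mathcal{Q}X+\tfrac12U^T\mathcal{R}U+\tfrac12x_N^TMx_N$ over the tangent plane $X-X^0=F'(U^0)(U-U^0)$, $x_N-x_N^0=(F_d^N)'(U^0)(U-U^0)$ (the ILQR step). Then, with $$W(U^0)=F'(U^0)^T\mathcal{Q}F'(U^0)+\mathcal{R}+(F_d^N)'(U^0)^TM(F_d^N)'(U^0),$$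 the matrix $W(U^0)$ is symmetric positive definite, $\tilde U$ is unique, and $$\tilde U-U^0=-W(U^0)^{-1}J_d'(U^0);$$ in particular $\tilde U-U^0$ is a descent direction for $J_d$ at $U^0$ (i.e. $J_d'(U^0)^T(\tilde U-U^0)<0$ whenever $J_d'(U^0)\neq0$).
   Context: $J_d$ is the cost of the optimization problem obtained by discretizing, with the given Runge–Kutta method, the problem of minimizing $\int_0^{t_f}(\tfrac12x^TQx+\tfrac12u^TRu)dt+\tfrac12x(t_f)^TMx(t_f)$ subject to $\dot x=f(x,u)$, $x(0)=a$, with $h=t_f/N$. $J_d'$ denotes the gradient of $J_d$ with respect to $U$, and $F'$, $(F_d^N)'$ the Jacobians. *)

theory Defs
  imports "HOL-Analysis.Analysis"
begin

text \<open>Steps are indexed by a finite linearly ordered type 'k (N = CARD('k)),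
  stages by a finite type 's (s = CARD('s)).  A vector of internal-stage
  controls U = (u_{ki}) is an element of real^'m^'s^'k (U $ k $ i = u_{ki}),
  likewise the internal-stage states X :: real^'n^'s^'k.  Node states are
  x_0, ..., x_N indexed by nat; step number j < N is the j-th element of 'k.\<close>

definition step_idx :: "nat \<Rightarrow> 'k::{finite,linorder}" where
  "step_idx j = sorted_list_of_set (UNIV :: 'k set) ! j"

definition rk_constraints ::
  "(real^'n \<Rightarrow> real^'m \<Rightarrow> real^'n) \<Rightarrow> real^'s^'s \<Rightarrow> real^'s \<Rightarrow> real \<Rightarrow> real^'n
   \<Rightarrow> (((real,'m) vec,'s) vec,'k::{finite,linorder}) vec \<Rightarrow> (((real,'n) vec,'s) vec,'k) vec \<Rightarrow> (nat \<Rightarrow> real^'n) \<Rightarrow> bool" where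
  "rk_constraints f A b h a U X xs \<longleftrightarrow>
     xs 0 = a \<and>
     (\<forall>j < CARD('k).
        xs (Suc j) = xs j + h *\<^sub>R (\<Sum>i\<in>UNIV. (b $ i) *\<^sub>R
                       f (X $ step_idx j $ i) (U $ step_idx j $ i))) \<and>
     (\<forall>j < CARD('k). \<forall>i.
        X $ step_idx j $ i = xs j + h *\<^sub>R (\<Sum>l\<in>UNIV. (A $ i $ l) *\<^sub>R
                       f (X $ step_idx j $ l) (U $ step_idx j $ l)))"

definition block_op :: "real \<Rightarrow> real^'s \<Rightarrow> real^'d^'d \<Rightarrow> real^'d^'s^'k \<Rightarrow> real^'d^'s^'k" where
  "block_op h b P Y = (\<chi> k i. (h * b $ i) *\<^sub>R (P *v (Y $ k $ i)))"

definition sym_psd :: "real^'d^'d \<Rightarrow> bool" where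
  "sym_psd P \<longleftrightarrow> transpose P = P \<and> (\<forall>x. 0 \<le> x \<bullet> (P *v x))"

definition sym_pd :: "real^'d^'d \<Rightarrow> bool" where
  "sym_pd P \<longleftrightarrow> transpose P = P \<and> (\<forall>x. x \<noteq> 0 \<longrightarrow> 0 < x \<bullet> (P *v x))"

definition sym_pd_op :: "('a::euclidean_space \<Rightarrow> 'a) \<Rightarrow> bool" where
  "sym_pd_op W \<longleftrightarrow> linear W \<and> (\<forall>x y. W x \<bullet> y = x \<bullet> W y) \<and> (\<forall>x. x \<noteq> 0 \<longrightarrow> 0 < x \<bullet> W x)"

end

theory Submission
  imports Defs
begin

lemma mat_selfadj:
  fixes P :: "real^'d^'d"
  assumes "transpose P = P"
  shows "(P *v x) \<bullet> y = x \<bullet> (P *v y)"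
proof -
  have "P *v x = x v* transpose P" by simp
  then show ?thesis using assms by (simp add: dot_lmul_matrix)
qed

lemma block_op_inner:
  "block_op h b P Y \<bullet> Z = (\<Sum>k\<in>UNIV. \<Sum>i\<in>UNIV. (h * b $ i) * ((P *v (Y $ k $ i)) \<bullet> Z $ k $ i))"
proof -
  have "block_op h b P Y \<bullet> Z = (\<Sum>k\<in>UNIV. (block_op h b P Y $ k) \<bullet> Z $ k)"
    by (rule inner_vec_def)
  also have "\<dots> = (\<Sum>k\<in>UNIV. \<Sum>i\<in>UNIV. (block_op h b P Y $ k $ i) \<bullet> Z $ k $ i)"
    by (rule sum.cong[OF refl], rule inner_vec_def)
  finally show ?thesis by (simp add: block_op_def)
qed

lemma block_op_linear: "linear (block_op h b P)"
  unfolding block_op_def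
  by (rule linearI) (simp_all add: vec_eq_iff matrix_vector_right_distrib scaleR_right_distrib matrix_vector_mult_scaleR)

lemma block_op_selfadj:
  assumes "transpose P = P"
  shows "block_op h b P Y \<bullet> Z = Y \<bullet> block_op h b P Z"
proof -
  have "Y \<bullet> block_op h b P Z = block_op h b P Z \<bullet> Y" by (rule inner_commute)
  also have "\<dots> = (\<Sum>k\<in>UNIV. \<Sum>i\<in>UNIV. (h * b $ i) * ((P *v (Z $ k $ i)) \<bullet> Y $ k $ i))"
    by (rule block_op_inner)
  also have "\<dots> = (\<Sum>k\<in>UNIV. \<Sum>i\<in>UNIV. (h * b $ i) * ((P *v (Y $ k $ i)) \<bullet> Z $ k $ i))"
    by (intro sum.cong refl) (metis mat_selfadj[OF assms] inner_commute)
  finally show ?thesis by (simp add: block_op_inner)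
qed

lemma block_op_psd:
  assumes "sym_psd P" "\<forall>i. 0 < b $ i" "0 < h"
  shows "0 \<le> Y \<bullet> block_op h b P Y"
proof -
  have "Y \<bullet> block_op h b P Y = block_op h b P Y \<bullet> Y" by (rule inner_commute)
  also have "\<dots> = (\<Sum>k\<in>UNIV. \<Sum>i\<in>UNIV. (h * b $ i) * ((P *v (Y $ k $ i)) \<bullet> Y $ k $ i))"
    by (rule block_op_inner)
  also have "\<dots> \<ge> 0"
  proof (intro sum_nonneg mult_nonneg_nonneg)
    fix k i
    show "0 \<le> h" "0 \<le> b $ i" using assms by (auto simp: less_imp_le)
    show "0 \<le> (P *v (Y $ k $ i)) \<bullet> Y $ k $ i" using assms(1) unfolding sym_psd_def
      by (metis inner_commute)
  qed
  finally show ?thesis .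
qed

lemma block_op_pd:
  assumes "sym_pd P" "\<forall>i. 0 < b $ i" "0 < h" "Y \<noteq> 0"
  shows "0 < Y \<bullet> block_op h b P Y"
proof -
  have nn: "0 \<le> (P *v v) \<bullet> v" for v using assms(1) unfolding sym_pd_def
    by (metis inner_commute inner_zero_right order.refl order_less_le)
  obtain k i where ki: "Y $ k $ i \<noteq> 0" using assms(4) by (metis vec_eq_iff zero_index)
  have "Y \<bullet> block_op h b P Y = block_op h b P Y \<bullet> Y" by (rule inner_commute)
  also have "\<dots> = (\<Sum>k\<in>UNIV. \<Sum>i\<in>UNIV. (h * b $ i) * ((P *v (Y $ k $ i)) \<bullet> Y $ k $ i))"
    by (rule block_op_inner)
  also have "\<dots> > 0"
  proof (rule sum_pos2[where i=k])
    show "0 < (\<Sum>i\<in>UNIV. (h * b $ i) * ((P *v (Y $ k $ i)) \<bullet> Y $ k $ i))"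
    proof (rule sum_pos2[where i=i])
      have "0 < (P *v (Y $ k $ i)) \<bullet> Y $ k $ i" using assms(1) ki unfolding sym_pd_def
        by (metis inner_commute)
      then show "0 < (h * b $ i) * ((P *v (Y $ k $ i)) \<bullet> Y $ k $ i)"
        using assms by simp
      show "\<And>j. j \<in> UNIV \<Longrightarrow> 0 \<le> (h * b $ j) * ((P *v (Y $ k $ j)) \<bullet> Y $ k $ j)"
        using assms nn by (simp add: less_imp_le)
    qed auto
    show "\<And>j. j \<in> UNIV \<Longrightarrow> 0 \<le> (\<Sum>i\<in>UNIV. (h * b $ i) * ((P *v (Y $ j $ i)) \<bullet> Y $ j $ i))"
      using assms nn by (intro sum_nonneg) (simp add: less_imp_le)
  qed auto
  finally show ?thesis .
qed

lemma mat_linear: "linear (\<lambda>x. (P::real^'a^'b) *v x)"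
  by (rule matrix_vector_mul_linear)


locale quadsetup =
  fixes L :: "'a::euclidean_space \<Rightarrow> 'b::euclidean_space" and Lf :: "'a \<Rightarrow> 'c::euclidean_space"
    and Qh :: "'b \<Rightarrow> 'b" and Rh :: "'a \<Rightarrow> 'a" and Mh :: "'c \<Rightarrow> 'c"
  assumes lL: "linear L" and lLf: "linear Lf" and lQ: "linear Qh" and lR: "linear Rh" and lM: "linear Mh"
    and saQ: "\<And>x y. Qh x \<bullet> y = x \<bullet> Qh y"
    and saR: "\<And>x y. Rh x \<bullet> y = x \<bullet> Rh y"
    and saM: "\<And>x y. Mh x \<bullet> y = x \<bullet> Mh y"
    and psdQ: "\<And>x. 0 \<le> x \<bullet> Qh x" and psdM: "\<And>x. 0 \<le> x \<bullet> Mh x"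
    and pdR: "\<And>x. x \<noteq> 0 \<Longrightarrow> 0 < x \<bullet> Rh x"
begin

definition WW where "WW = (\<lambda>V. adjoint L (Qh (L V)) + Rh V + adjoint Lf (Mh (Lf V)))"

definition phi where "phi X U x = (1/2) * (X \<bullet> Qh X) + (1/2) * (U \<bullet> Rh U) + (1/2) * (x \<bullet> Mh x)"

lemma lin_adjL: "linear (adjoint L)" using adjoint_linear[OF lL] .
lemma lin_adjLf: "linear (adjoint Lf)" using adjoint_linear[OF lLf] .

lemma WW_linear: "linear WW"
  unfolding WW_def
  by (intro linear_compose_add linear_compose[unfolded o_def, OF linear_compose[unfolded o_def, OF lL lQ] lin_adjL]
      linear_compose[unfolded o_def, OF linear_compose[unfolded o_def, OF lLf lM] lin_adjLf] lR)

lemma WW_inner: "WW V \<bullet> Z = L V \<bullet> Qh (L Z) + V \<bullet> Rh Z + Lf V \<bullet> Mh (Lf Z)"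
proof -
  have "WW V \<bullet> Z = adjoint L (Qh (L V)) \<bullet> Z + Rh V \<bullet> Z + adjoint Lf (Mh (Lf V)) \<bullet> Z"
    unfolding WW_def by (simp only: inner_add_left)
  also have "\<dots> = Qh (L V) \<bullet> L Z + Rh V \<bullet> Z + Mh (Lf V) \<bullet> Lf Z"
    by (simp only: adjoint_clauses(2)[OF lL] adjoint_clauses(2)[OF lLf])
  also have "\<dots> = L V \<bullet> Qh (L Z) + V \<bullet> Rh Z + Lf V \<bullet> Mh (Lf Z)"
    by (simp only: saQ saR saM)
  finally show ?thesis .
qed

lemma WW_sym: "WW x \<bullet> y = x \<bullet> WW y"
proof -
  have "x \<bullet> WW y = WW y \<bullet> x" by (rule inner_commute)
  also have "\<dots> = L y \<bullet> Qh (L x) + y \<bullet> Rh x + Lf y \<bullet> Mh (Lf x)" by (rule WW_inner)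
  also have "\<dots> = L x \<bullet> Qh (L y) + x \<bullet> Rh y + Lf x \<bullet> Mh (Lf y)"
    by (metis saQ saR saM inner_commute)
  finally show ?thesis by (simp add: WW_inner)
qed

lemma WW_pd: "x \<noteq> 0 \<Longrightarrow> 0 < x \<bullet> WW x"
proof -
  assume "x \<noteq> 0"
  then have "0 < x \<bullet> Rh x" by (rule pdR)
  moreover have "0 \<le> L x \<bullet> Qh (L x)" "0 \<le> Lf x \<bullet> Mh (Lf x)" by (rule psdQ, rule psdM)
  ultimately show ?thesis by (metis inner_commute WW_inner add_pos_nonneg add_nonneg_pos)
qed

lemma WW_sym_pd: "sym_pd_op WW"
  unfolding sym_pd_op_def using WW_linear WW_sym WW_pd by blast

lemma expansion:
  "phi (X + L w) (U + w) (x + Lf w) = phi X U x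
     + (adjoint L (Qh X) + Rh U + adjoint Lf (Mh x)) \<bullet> w + (1/2) * (w \<bullet> WW w)"
proof -
  have a1: "adjoint L (Qh X) \<bullet> w = L w \<bullet> Qh X" by (metis adjoint_clauses(1)[OF lL] inner_commute)
  have a2: "adjoint Lf (Mh x) \<bullet> w = Lf w \<bullet> Mh x" by (metis adjoint_clauses(1)[OF lLf] inner_commute)
  have w: "w \<bullet> WW w = L w \<bullet> Qh (L w) + w \<bullet> Rh w + Lf w \<bullet> Mh (Lf w)"
    by (metis inner_commute WW_inner)
  have q1: "X \<bullet> Qh (L w) = L w \<bullet> Qh X" by (metis saQ inner_commute)
  have q2: "x \<bullet> Mh (Lf w) = Lf w \<bullet> Mh x" by (metis saM inner_commute)
  have q3: "U \<bullet> Rh w = Rh U \<bullet> w" by (metis saR)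
  have q4: "w \<bullet> Rh U = Rh U \<bullet> w" by (metis saR inner_commute)
  show ?thesis
    unfolding phi_def w
    by (simp add: linear_add[OF lQ] linear_add[OF lR] linear_add[OF lM] inner_add_left inner_add_right
        a1 a2 q1 q2 q3 q4 algebra_simps)
qed

lemma minimizer:
  assumes f1: "X - X0 = L (U1 - U0)" and f2: "x - x0 = Lf (U1 - U0)"
    and mn: "\<forall>U' X' x'. X' - X0 = L (U' - U0) \<and> x' - x0 = Lf (U' - U0) \<longrightarrow>
            (1/2) * (X \<bullet> Qh X) + (1/2) * (U1 \<bullet> Rh U1) + (1/2) * (x \<bullet> Mh x)
            \<le> (1/2) * (X' \<bullet> Qh X') + (1/2) * (U' \<bullet> Rh U') + (1/2) * (x' \<bullet> Mh x')"
  shows "WW (U1 - U0) = - (adjoint L (Qh X0) + Rh U0 + adjoint Lf (Mh x0))"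
proof -
  define G where "G = adjoint L (Qh X) + Rh U1 + adjoint Lf (Mh x)"
  have mn': "phi X U1 x \<le> phi (X + L w) (U1 + w) (x + Lf w)" for w
  proof -
    have "(X + L w) - X0 = L (U1 + w - U0)" using f1
      by (simp add: linear_add[OF lL, symmetric] algebra_simps)
    moreover have "(x + Lf w) - x0 = Lf (U1 + w - U0)" using f2
      by (simp add: linear_add[OF lLf, symmetric] algebra_simps)
    ultimately show ?thesis using mn unfolding phi_def by blast
  qed
  have G0: "G = 0"
  proof (rule ccontr)
    assume "G \<noteq> 0"
    define a where "a = G \<bullet> G"
    define c where "c = G \<bullet> WW G"
    have a: "0 < a" using \<open>G \<noteq> 0\<close> by (simp add: a_def)
    have c: "0 < c" using WW_pd[OF \<open>G \<noteq> 0\<close>] by (simp add: c_def)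
    define s where "s = a / c"
    have "phi X U1 x \<le> phi X U1 x + G \<bullet> (- s *\<^sub>R G) + (1/2) * ((- s *\<^sub>R G) \<bullet> WW (- s *\<^sub>R G))"
      using mn'[of "- s *\<^sub>R G"] expansion[of X "- s *\<^sub>R G" U1 x] by (simp add: G_def)
    also have "\<dots> = phi X U1 x - s * a + (1/2) * (s * s * c)"
      by (simp add: linear_scale[OF WW_linear] linear_neg[OF WW_linear] a_def c_def)
    also have "\<dots> = phi X U1 x - a * a / (2 * c)"
      using c by (simp add: s_def field_simps power2_eq_square)
    finally have "a * a / (2 * c) \<le> 0" by simp
    moreover have "0 < a * a / (2 * c)" using a c by simp
    ultimately show False by simp
  qed
  have XX: "X = X0 + L (U1 - U0)" "x = x0 + Lf (U1 - U0)" using f1 f2 by (simp_all add: algebra_simps)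
  have "G = adjoint L (Qh X0) + Rh U0 + adjoint Lf (Mh x0) + WW (U1 - U0)"
    unfolding G_def WW_def XX
    by (simp add: linear_add[OF lQ] linear_add[OF lM] linear_add[OF lin_adjL] linear_add[OF lin_adjLf]
        linear_diff[OF lR] algebra_simps)
  then show ?thesis using G0 by (simp add: eq_neg_iff_add_eq_0 algebra_simps)
qed

lemma WW_inj: "inj WW"
proof (rule linear_injective_0[OF WW_linear, THEN iffD2], intro allI impI)
  fix x assume "WW x = 0"
  then have "x \<bullet> WW x = 0" by simp
  then show "x = 0" using WW_pd by (metis less_irrefl)
qed

lemma gradient:
  assumes dF: "(Fm has_derivative L) (at U0)" and dN: "(Fn has_derivative Lf) (at U0)"
  shows "GDERIV (\<lambda>U. phi (Fm U) U (Fn U)) U0 :> (adjoint L (Qh (Fm U0)) + Rh U0 + adjoint Lf (Mh (Fn U0)))"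
proof -
  have bQ: "bounded_linear Qh" using lQ linear_conv_bounded_linear by blast
  have bR: "bounded_linear Rh" using lR linear_conv_bounded_linear by blast
  have bM: "bounded_linear Mh" using lM linear_conv_bounded_linear by blast
  have d1: "((\<lambda>U. Fm U \<bullet> Qh (Fm U)) has_derivative (\<lambda>v. Fm U0 \<bullet> Qh (L v) + L v \<bullet> Qh (Fm U0))) (at U0)"
    by (rule has_derivative_inner[OF dF bounded_linear.has_derivative[OF bQ dF]])
  have d2: "((\<lambda>U. U \<bullet> Rh U) has_derivative (\<lambda>v. U0 \<bullet> Rh v + v \<bullet> Rh U0)) (at U0)"
    by (rule has_derivative_inner[OF has_derivative_ident bounded_linear.has_derivative[OF bR has_derivative_ident]])
  have d3: "((\<lambda>U. Fn U \<bullet> Mh (Fn U)) has_derivative (\<lambda>v. Fn U0 \<bullet> Mh (Lf v) + Lf v \<bullet> Mh (Fn U0))) (at U0)"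
    by (rule has_derivative_inner[OF dN bounded_linear.has_derivative[OF bM dN]])
  have d: "((\<lambda>U. phi (Fm U) U (Fn U)) has_derivative
     (\<lambda>v. (1/2) * (Fm U0 \<bullet> Qh (L v) + L v \<bullet> Qh (Fm U0)) + (1/2) * (U0 \<bullet> Rh v + v \<bullet> Rh U0)
        + (1/2) * (Fn U0 \<bullet> Mh (Lf v) + Lf v \<bullet> Mh (Fn U0)))) (at U0)"
    unfolding phi_def
    by (intro has_derivative_add has_derivative_mult_right d1 d2 d3)
  show ?thesis unfolding gderiv_def
  proof (rule has_derivative_eq_rhs[OF d], rule ext)
    fix v
    have e1: "Fm U0 \<bullet> Qh (L v) = L v \<bullet> Qh (Fm U0)" by (metis saQ inner_commute)
    have e2: "U0 \<bullet> Rh v = v \<bullet> Rh U0" by (metis saR inner_commute)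
    have e3: "Fn U0 \<bullet> Mh (Lf v) = Lf v \<bullet> Mh (Fn U0)" by (metis saM inner_commute)
    have a1: "v \<bullet> adjoint L (Qh (Fm U0)) = L v \<bullet> Qh (Fm U0)" by (rule adjoint_clauses(1)[OF lL])
    have a2: "v \<bullet> adjoint Lf (Mh (Fn U0)) = Lf v \<bullet> Mh (Fn U0)" by (rule adjoint_clauses(1)[OF lLf])
    show "(1/2) * (Fm U0 \<bullet> Qh (L v) + L v \<bullet> Qh (Fm U0)) + (1/2) * (U0 \<bullet> Rh v + v \<bullet> Rh U0)
        + (1/2) * (Fn U0 \<bullet> Mh (Lf v) + Lf v \<bullet> Mh (Fn U0))
       = v \<bullet> (adjoint L (Qh (Fm U0)) + Rh U0 + adjoint Lf (Mh (Fn U0)))"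
      by (simp only: e1 e2 e3 inner_add_right a1 a2) simp
  qed
qed

end


lemma quadsetup_inst: fixes DF :: "real^'m^'s^'k \<Rightarrow> real^'n^'s^'k" and DFN :: "real^'m^'s^'k \<Rightarrow> real^'n" and M :: "real^'n^'n" and Q :: "real^'n^'n" and R :: "real^'m^'m"
  assumes lDF: "linear DF" and lDFN: "linear DFN" and tQ: "transpose Q = Q" and tR: "transpose R = R" and tM: "transpose M = M"
   and Q: "sym_psd Q" and M: "sym_psd M" and R: "sym_pd R" and b_pos: "\<forall>i. 0 < b $ i" and h_pos: "0 < h"
  shows "quadsetup DF DFN (block_op h b Q) (block_op h b R) (\<lambda>x. M *v x)"
  unfolding quadsetup_def
proof (intro conjI allI impI)
    show "linear DF" "linear DFN" by (fact lDF, fact lDFN)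
    show "linear (block_op h b Q)" "linear (block_op h b R)" by (rule block_op_linear)+
    show "linear ((*v) M)" by (rule matrix_vector_mul_linear)
    show "\<And>x y. block_op h b Q x \<bullet> y = x \<bullet> block_op h b Q y" by (rule block_op_selfadj[OF tQ])
    show "\<And>x y. block_op h b R x \<bullet> y = x \<bullet> block_op h b R y" by (rule block_op_selfadj[OF tR])
    show "\<And>x y. (M *v x) \<bullet> y = x \<bullet> (M *v y)" by (rule mat_selfadj[OF tM])
    show "\<And>x. 0 \<le> x \<bullet> block_op h b Q x" by (rule block_op_psd[OF Q b_pos h_pos])
    show "\<And>x. 0 \<le> x \<bullet> (M *v x)" using M unfolding sym_psd_def by blast
    show "\<And>x. x \<noteq> 0 \<Longrightarrow> 0 < x \<bullet> block_op h b R x" by (rule block_op_pd[OF R b_pos h_pos])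
qed

theorem mainTheorem5:
  fixes Q :: "real^'n^'n" and R :: "real^'m^'m" and M :: "real^'n^'n"
    and f :: "real^'n \<Rightarrow> real^'m \<Rightarrow> real^'n"
    and A :: "real^'s^'s" and b :: "real^'s" and h :: real and a :: "real^'n"
    and F :: "(((real,'m) vec,'s) vec,'k::{finite,linorder}) vec \<Rightarrow> (((real,'n) vec,'s) vec,'k) vec"
    and Fd :: "nat \<Rightarrow> (((real,'m) vec,'s) vec,'k) vec \<Rightarrow> real^'n"
    and U0 Ut :: "(((real,'m) vec,'s) vec,'k) vec"
    and DF :: "(((real,'m) vec,'s) vec,'k) vec \<Rightarrow> (((real,'n) vec,'s) vec,'k) vec"
    and DFN :: "(((real,'m) vec,'s) vec,'k) vec \<Rightarrow> real^'n"
  assumes Q: "sym_psd Q" and R: "sym_pd R" and M: "sym_psd M"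
    and f_smooth: "\<forall>z. (\<lambda>p. f (fst p) (snd p)) differentiable (at z)"
    and b_pos: "\<forall>i. 0 < b $ i" and h_pos: "0 < h"
    and determ: "\<forall>U X xs. rk_constraints f A b h a U X xs \<longleftrightarrow>
                   (X = F U \<and> (\<forall>k \<le> CARD('k). xs k = Fd k U))"
    and F_smooth: "\<forall>U. F differentiable (at U)"
    and Fd_smooth: "\<forall>k \<le> CARD('k). \<forall>U. Fd k differentiable (at U)"
    and DF: "(F has_derivative DF) (at U0)"
    and DFN: "(Fd CARD('k) has_derivative DFN) (at U0)"
    and Ut_min: "\<exists>X x. X - F U0 = DF (Ut - U0) \<and> x - Fd CARD('k) U0 = DFN (Ut - U0) \<and>
         (\<forall>U' X' x'. X' - F U0 = DF (U' - U0) \<and> x' - Fd CARD('k) U0 = DFN (U' - U0) \<longrightarrow>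
            (1/2) * (X \<bullet> block_op h b Q X) + (1/2) * (Ut \<bullet> block_op h b R Ut) + (1/2) * (x \<bullet> (M *v x))
            \<le> (1/2) * (X' \<bullet> block_op h b Q X') + (1/2) * (U' \<bullet> block_op h b R U') + (1/2) * (x' \<bullet> (M *v x')))"
  defines "Jd \<equiv> \<lambda>U. (1/2) * (F U \<bullet> block_op h b Q (F U)) + (1/2) * (U \<bullet> block_op h b R U)
                 + (1/2) * (Fd CARD('k) U \<bullet> (M *v Fd CARD('k) U))"
    and "W \<equiv> \<lambda>V. adjoint DF (block_op h b Q (DF V)) + block_op h b R V + adjoint DFN (M *v DFN V)"
  shows "sym_pd_op W
    \<and> (\<forall>U1. (\<exists>X x. X - F U0 = DF (U1 - U0) \<and> x - Fd CARD('k) U0 = DFN (U1 - U0) \<and>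
         (\<forall>U' X' x'. X' - F U0 = DF (U' - U0) \<and> x' - Fd CARD('k) U0 = DFN (U' - U0) \<longrightarrow>
            (1/2) * (X \<bullet> block_op h b Q X) + (1/2) * (U1 \<bullet> block_op h b R U1) + (1/2) * (x \<bullet> (M *v x))
            \<le> (1/2) * (X' \<bullet> block_op h b Q X') + (1/2) * (U' \<bullet> block_op h b R U') + (1/2) * (x' \<bullet> (M *v x'))))
         \<longrightarrow> U1 = Ut)
    \<and> (\<exists>g. GDERIV Jd U0 :> g \<and> Ut - U0 = - inv W g \<and> (g \<noteq> 0 \<longrightarrow> g \<bullet> (Ut - U0) < 0))"
proof -
  have lDF: "linear DF" by (rule has_derivative_linear[OF DF])
  have lDFN: "linear DFN" by (rule has_derivative_linear[OF DFN])
  have tQ: "transpose Q = Q" using Q unfolding sym_psd_def by blast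
  have tR: "transpose R = R" using R unfolding sym_pd_def by blast
  have tM: "transpose M = M" using M unfolding sym_psd_def by blast
  interpret q: quadsetup DF DFN "block_op h b Q" "block_op h b R" "\<lambda>x. M *v x"
    by (rule quadsetup_inst[OF lDF lDFN tQ tR tM Q M R b_pos h_pos])
  have Weq: "W = q.WW" by (simp add: W_def q.WW_def)
  have Jeq: "Jd = (\<lambda>U. q.phi (F U) U (Fd CARD('k) U))" by (simp add: Jd_def q.phi_def fun_eq_iff)
  define g where "g = adjoint DF (block_op h b Q (F U0)) + block_op h b R U0 + adjoint DFN (M *v Fd CARD('k) U0)"
  have grad: "GDERIV Jd U0 :> g" unfolding Jeq g_def by (rule q.gradient[OF DF DFN])
  have key: "W (U1 - U0) = - g" if
    "\<exists>X x. X - F U0 = DF (U1 - U0) \<and> x - Fd CARD('k) U0 = DFN (U1 - U0) \<and>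
         (\<forall>U' X' x'. X' - F U0 = DF (U' - U0) \<and> x' - Fd CARD('k) U0 = DFN (U' - U0) \<longrightarrow>
            (1/2) * (X \<bullet> block_op h b Q X) + (1/2) * (U1 \<bullet> block_op h b R U1) + (1/2) * (x \<bullet> (M *v x))
            \<le> (1/2) * (X' \<bullet> block_op h b Q X') + (1/2) * (U' \<bullet> block_op h b R U') + (1/2) * (x' \<bullet> (M *v x')))"
    for U1
  proof -
    from that obtain X x where X: "X - F U0 = DF (U1 - U0)" "x - Fd CARD('k) U0 = DFN (U1 - U0)"
      and mn: "\<forall>U' X' x'. X' - F U0 = DF (U' - U0) \<and> x' - Fd CARD('k) U0 = DFN (U' - U0) \<longrightarrow>
            (1/2) * (X \<bullet> block_op h b Q X) + (1/2) * (U1 \<bullet> block_op h b R U1) + (1/2) * (x \<bullet> (M *v x))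
            \<le> (1/2) * (X' \<bullet> block_op h b Q X') + (1/2) * (U' \<bullet> block_op h b R U') + (1/2) * (x' \<bullet> (M *v x'))"
      by blast
    show ?thesis unfolding Weq g_def by (rule q.minimizer[OF X mn])
  qed
  have kt: "W (Ut - U0) = - g" by (rule key[OF Ut_min])
  have uniq: "\<forall>U1. (\<exists>X x. X - F U0 = DF (U1 - U0) \<and> x - Fd CARD('k) U0 = DFN (U1 - U0) \<and>
         (\<forall>U' X' x'. X' - F U0 = DF (U' - U0) \<and> x' - Fd CARD('k) U0 = DFN (U' - U0) \<longrightarrow>
            (1/2) * (X \<bullet> block_op h b Q X) + (1/2) * (U1 \<bullet> block_op h b R U1) + (1/2) * (x \<bullet> (M *v x))
            \<le> (1/2) * (X' \<bullet> block_op h b Q X') + (1/2) * (U' \<bullet> block_op h b R U') + (1/2) * (x' \<bullet> (M *v x'))))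
         \<longrightarrow> U1 = Ut"
  proof (intro allI impI)
    fix U1 assume h: "\<exists>X x. X - F U0 = DF (U1 - U0) \<and> x - Fd CARD('k) U0 = DFN (U1 - U0) \<and>
         (\<forall>U' X' x'. X' - F U0 = DF (U' - U0) \<and> x' - Fd CARD('k) U0 = DFN (U' - U0) \<longrightarrow>
            (1/2) * (X \<bullet> block_op h b Q X) + (1/2) * (U1 \<bullet> block_op h b R U1) + (1/2) * (x \<bullet> (M *v x))
            \<le> (1/2) * (X' \<bullet> block_op h b Q X') + (1/2) * (U' \<bullet> block_op h b R U') + (1/2) * (x' \<bullet> (M *v x')))"
    have "W (U1 - U0) = W (Ut - U0)" using key[OF h] kt by simp
    then have "U1 - U0 = Ut - U0" using q.WW_inj unfolding Weq by (meson injD)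
    then show "U1 = Ut" by simp
  qed
  have wg: "W (- (Ut - U0)) = g" using kt unfolding Weq by (simp only: linear_neg[OF q.WW_linear] minus_minus)
  have invg: "inv W g = - (Ut - U0)" using wg q.WW_inj unfolding Weq by (metis inv_f_f)
  have desc: "g \<bullet> (Ut - U0) < 0" if "g \<noteq> 0"
  proof -
    have nz: "Ut - U0 \<noteq> 0" using kt that linear_0[OF q.WW_linear] unfolding Weq by auto
    have "0 < (Ut - U0) \<bullet> W (Ut - U0)" using q.WW_pd[OF nz] unfolding Weq .
    then show ?thesis using kt by (simp add: inner_commute)
  qed
  show ?thesis
    using q.WW_sym_pd uniq grad invg desc unfolding Weq[symmetric] by auto
qed

end
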